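(* Let $d\ge1$, let $\Lambda\subset\mathbb{R}^{2d}$ be a lattice, let $g\in L^2(\mathbb{R}^d)$ be such that $(g,\Lambda)$ induces a frame with frame constants $A,B>0$, and let $\Omega\subset\mathbb{R}^{2d}$ be compact. Then for each $\delta\in(0,1)$, $$\Big|B\,\#\{k:\lambda_k^\Omega>B(1-\delta)\}-\#(\Omega\cap\Lambda)\Vert g\Vert_{L^2}^2\Big|\le\max\Big\{\frac1\delta,\frac1{1-\delta}\Big\}\Big|\#(\Omega\cap\Lambda)\Vert g\Vert_{L^2}^2-\frac1B\sum_{\lambda\in\Omega\cap\Lambda}\sum_{\lambda'\in\Omega\cap\Lambda}|V_gg(\lambda-\lambda')|^2\Big|.$$
   Context: For $z=(x,\omega)\in\mathbb{R}^{2d}$ the time-frequency shift $\pi(z)$ acts on $L^2(\mathbb{R}^d)$ by $\pi(x,\omega)f(t)=e^{2\pi i\omega\cdot t}f(t-x)$, and $V_gf(z)=\langle f,\pi(z)g\rangle$. A lattice is $\Lambda=M\mathbb{Z}^{2d}$ with $M$ an invertible real $2d\times2d$ matrix. $(g,\Lambda)$ induces a frame with frame constants $A,B>0$ if $A\Vert f\Vert_{L^2}^2\le\sum_{\lambda\in\Lambda}|\langle f,\pi(\lambda)g\rangle|^2\le B\Vert f\Vert_{L^2}^2$ for all $f\in L^2(\mathbb{R}^d)$. For compact $\Omega$ the Gabor multiplier is $G^g_{\Omega,\Lambda}f=\sum_{\lambda\in\Lambda}\chi_\Omega(\lambda)V_gf(\lambda)\pi(\lambda)g$; it is a finite-rank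 positive self-adjoint operator with eigenvalues $(\lambda_k^\Omega)_{k\ge1}$ (counted with multiplicity, with respect to an orthonormal eigenbasis of $L^2(\mathbb{R}^d)$), all lying in $[0,B]$. $\#$ denotes cardinality. *)

theory Defs
  imports "HOL-Analysis.Analysis"
begin

text \<open>Phase space R^{2d} is modelled as pairs (x, omega) of vectors in R^d = real^'d.
  Elements of L^2(R^d) are represented by square-integrable functions real^'d => complex
  (equalities between them are taken almost everywhere).\<close>

type_synonym 'd phase = "(real^'d) \<times> (real^'d)"
type_synonym 'd fn = "real^'d \<Rightarrow> complex"

definition L2 :: "'d::finite fn \<Rightarrow> bool" where
  "L2 f \<longleftrightarrow> f \<in> borel_measurable lborel \<and> integrable lborel (\<lambda>t. (cmod (f t))\<^sup>2)"

definition l2_inner :: "'d::finite fn \<Rightarrow> 'd fn \<Rightarrow> complex" where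
  "l2_inner f h = (LINT t|lborel. f t * cnj (h t))"

definition l2_norm :: "'d::finite fn \<Rightarrow> real" where
  "l2_norm f = sqrt (LINT t|lborel. (cmod (f t))\<^sup>2)"

definition tfs :: "'d::finite phase \<Rightarrow> 'd fn \<Rightarrow> 'd fn" where
  "tfs z f = (\<lambda>t. exp (\<i> * complex_of_real (2 * pi * (snd z \<bullet> t))) * f (t - fst z))"

definition stft :: "'d::finite fn \<Rightarrow> 'd fn \<Rightarrow> 'd phase \<Rightarrow> complex" where
  "stft g f z = l2_inner f (tfs z g)"

definition int_points :: "'d::finite phase set" where
  "int_points = {z. (\<forall>i. fst z $ i \<in> \<int>) \<and> (\<forall>i. snd z $ i \<in> \<int>)}"

definition is_lattice :: "'d::finite phase set \<Rightarrow> bool" where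
  "is_lattice \<Lambda> \<longleftrightarrow> (\<exists>M::'d phase \<Rightarrow> 'd phase. linear M \<and> bij M \<and> \<Lambda> = M ` int_points)"

definition gabor_frame :: "'d::finite fn \<Rightarrow> 'd phase set \<Rightarrow> real \<Rightarrow> real \<Rightarrow> bool" where
  "gabor_frame g \<Lambda> A B \<longleftrightarrow> L2 g \<and> 0 < A \<and> 0 < B \<and>
     (\<forall>f. L2 f \<longrightarrow>
        (\<lambda>z. (cmod (stft g f z))\<^sup>2) summable_on \<Lambda> \<and>
        A * (l2_norm f)\<^sup>2 \<le> (\<Sum>\<^sub>\<infinity>z\<in>\<Lambda>. (cmod (stft g f z))\<^sup>2) \<and>
        (\<Sum>\<^sub>\<infinity>z\<in>\<Lambda>. (cmod (stft g f z))\<^sup>2) \<le> B * (l2_norm f)\<^sup>2)"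

text \<open>Gabor multiplier G f = sum_{lambda in Lambda} chi_Omega(lambda) V_g f(lambda) pi(lambda) g,
  i.e. the (finite) sum over Omega \<inter> Lambda.\<close>
definition gabor_mult :: "'d::finite fn \<Rightarrow> 'd phase set \<Rightarrow> 'd phase set \<Rightarrow> 'd fn \<Rightarrow> 'd fn" where
  "gabor_mult g \<Omega> \<Lambda> f = (\<lambda>t. \<Sum>z\<in>\<Omega> \<inter> \<Lambda>. stft g f z * tfs z g t)"

definition orthonormal_eigenbasis ::
  "('d::finite fn \<Rightarrow> 'd fn) \<Rightarrow> (nat \<Rightarrow> 'd fn) \<Rightarrow> (nat \<Rightarrow> real) \<Rightarrow> bool" where
  "orthonormal_eigenbasis T e lam \<longleftrightarrow>
     (\<forall>k. L2 (e k)) \<and>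
     (\<forall>j k. l2_inner (e j) (e k) = (if j = k then 1 else 0)) \<and>
     (\<forall>f. L2 f \<longrightarrow> (\<forall>\<epsilon>>0. \<exists>n c. l2_norm (\<lambda>t. f t - (\<Sum>k<n. c k * e k t)) < \<epsilon>)) \<and>
     (\<forall>k. AE t in lborel. T (e k) t = complex_of_real (lam k) * e k t)"

end

theory Submission
  imports Defs
begin

lemma L2_meas: "L2 f \<Longrightarrow> f \<in> borel_measurable borel"
  by (simp add: L2_def)
lemma L2_int: "L2 f \<Longrightarrow> integrable lborel (\<lambda>t. (cmod (f t))\<^sup>2)"
  by (simp add: L2_def)

lemma cnj_meas[measurable]: "h \<in> borel_measurable M \<Longrightarrow> (\<lambda>x. cnj (h x)) \<in> borel_measurable M"
  by (rule borel_measurable_continuous_on[where f=cnj]) (auto intro: continuous_intros)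

lemma prod_bound: "a * b \<le> a\<^sup>2 + (b::real)\<^sup>2" if "a \<ge> 0" "b \<ge> 0"
proof -
  have "(a-b)^2 + 2*(a*b) = a^2+b^2" by (simp add: power2_eq_square algebra_simps)
  moreover have "0 \<le> (a-b)^2" by simp
  moreover have "0 \<le> a*b" using that by simp
  ultimately show ?thesis by linarith
qed

lemma sq_sum_bound: "(p+q)^2 \<le> 2*p^2 + 2*(q::real)^2"
proof -
  have "(p+q)^2 + (p-q)^2 = 2*p^2 + 2*q^2" by (simp add: power2_eq_square algebra_simps)
  moreover have "0 \<le> (p-q)^2" by simp
  ultimately show ?thesis by linarith
qed

lemma L2_prod_int:
  assumes "L2 f" "L2 h" shows "integrable lborel (\<lambda>t. f t * cnj (h t))"
proof (rule Bochner_Integration.integrable_bound)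
  show "integrable lborel (\<lambda>t. (cmod (f t))\<^sup>2 + (cmod (h t))\<^sup>2)"
    using assms by (simp add: L2_int)
  have [measurable]: "f \<in> borel_measurable borel" "h \<in> borel_measurable borel"
    using assms L2_meas by auto
  show "(\<lambda>t. f t * cnj (h t)) \<in> borel_measurable lborel"
    by measurable
  show "AE x in lborel. norm (f x * cnj (h x)) \<le> norm ((cmod (f x))\<^sup>2 + (cmod (h x))\<^sup>2)"
    by (auto simp: norm_mult intro!: prod_bound)
qed

lemma L2_zero: "L2 (\<lambda>t. 0)" by (simp add: L2_def)

lemma L2_add: assumes "L2 f" "L2 h" shows "L2 (\<lambda>t. f t + h t)"
  unfolding L2_def
proof
  show "(\<lambda>t. f t + h t) \<in> borel_measurable lborel" using assms L2_meas by measurable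
  show "integrable lborel (\<lambda>t. (cmod (f t + h t))\<^sup>2)"
  proof (rule Bochner_Integration.integrable_bound)
    show "integrable lborel (\<lambda>t. 2 * (cmod (f t))\<^sup>2 + 2 * (cmod (h t))\<^sup>2)"
      using assms by (simp add: L2_int)
    show "(\<lambda>t. (cmod (f t + h t))\<^sup>2) \<in> borel_measurable lborel"
      using assms L2_meas by measurable
    show "AE x in lborel. norm ((cmod (f x + h x))\<^sup>2) \<le> norm (2 * (cmod (f x))\<^sup>2 + 2 * (cmod (h x))\<^sup>2)"
    proof (intro AE_I2)
      fix x
      have "cmod (f x + h x) \<le> cmod (f x) + cmod (h x)" by (rule norm_triangle_ineq)
      hence "(cmod (f x + h x))\<^sup>2 \<le> (cmod (f x) + cmod (h x))\<^sup>2"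
        by (simp add: power_mono)
      also have "\<dots> \<le> 2 * (cmod (f x))\<^sup>2 + 2 * (cmod (h x))\<^sup>2"
        by (rule sq_sum_bound)
      finally show "norm ((cmod (f x + h x))\<^sup>2) \<le> norm (2 * (cmod (f x))\<^sup>2 + 2 * (cmod (h x))\<^sup>2)"
        by simp
    qed
  qed
qed

lemma L2_scale: assumes "L2 f" shows "L2 (\<lambda>t. c * f t)"
  using assms unfolding L2_def
  by (auto simp: norm_mult power_mult_distrib)

lemma L2_diff: assumes "L2 f" "L2 h" shows "L2 (\<lambda>t. f t - h t)"
  using L2_add[OF assms(1) L2_scale[OF assms(2), of "-1"]] by simp

lemma L2_sum: assumes "\<And>k. k \<in> F \<Longrightarrow> L2 (u k)" shows "L2 (\<lambda>t. \<Sum>k\<in>F. c k * u k t)"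
  using assms
proof (induction F rule: infinite_finite_induct)
  case (insert x F)
  then show ?case by (simp add: L2_add L2_scale)
qed (simp_all add: L2_zero)

lemma lborel_shift:
  fixes F :: "'a::euclidean_space \<Rightarrow> 'b::{banach,second_countable_topology}"
  assumes "F \<in> borel_measurable borel"
  shows "integrable lborel (\<lambda>x. F (x + c)) \<longleftrightarrow> integrable lborel F"
    and "integral\<^sup>L lborel (\<lambda>x. F (x + c)) = integral\<^sup>L lborel F"
proof -
  have m: "((+) c) \<in> measurable lborel borel" by simp
  show "integrable lborel (\<lambda>x. F (x + c)) \<longleftrightarrow> integrable lborel F"
    using integrable_distr_eq[OF m assms] by (simp add: lborel_distr_plus add.commute)
  show "integral\<^sup>L lborel (\<lambda>x. F (x + c)) = integral\<^sup>L lborel F"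
    using integral_distr[OF m assms] by (simp add: lborel_distr_plus add.commute)
qed

lemma tfs_meas: "L2 g \<Longrightarrow> tfs z g \<in> borel_measurable borel"
  unfolding tfs_def using L2_meas by measurable

lemma norm_tfs: "cmod (tfs z g t) = cmod (g (t - fst z))"
  unfolding tfs_def by (simp add: norm_mult norm_exp_i_times)

lemma L2_tfs: assumes "L2 g" shows "L2 (tfs z g)"
  unfolding L2_def
proof
  show "tfs z g \<in> borel_measurable lborel" using tfs_meas[OF assms] by simp
  have m: "(\<lambda>t. (cmod (g t))\<^sup>2) \<in> borel_measurable borel" using L2_meas[OF assms] by measurable
  have "integrable lborel (\<lambda>t. (cmod (g (t + (- fst z))))\<^sup>2)"
    using lborel_shift(1)[OF m, of "- fst z"] L2_int[OF assms] by simp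
  then show "integrable lborel (\<lambda>t. (cmod (tfs z g t))\<^sup>2)" by (simp add: norm_tfs)
qed

lemma ip_cnj: "l2_inner f h = cnj (l2_inner h f)"
  unfolding l2_inner_def by (subst Bochner_Integration.integral_cnj[symmetric]) (simp add: mult.commute)

lemma ip_add_left: "L2 f \<Longrightarrow> L2 f' \<Longrightarrow> L2 h \<Longrightarrow>
   l2_inner (\<lambda>t. f t + f' t) h = l2_inner f h + l2_inner f' h"
  unfolding l2_inner_def by (simp add: distrib_right L2_prod_int)

lemma ip_scale_left: "l2_inner (\<lambda>t. c * f t) h = c * l2_inner f h"
  unfolding l2_inner_def by (simp add: mult.assoc)

lemma ip_diff_left: "L2 f \<Longrightarrow> L2 f' \<Longrightarrow> L2 h \<Longrightarrow>
   l2_inner (\<lambda>t. f t - f' t) h = l2_inner f h - l2_inner f' h"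
  unfolding l2_inner_def by (simp add: left_diff_distrib L2_prod_int)

lemma ip_sum_left: assumes "\<And>k. k \<in> F \<Longrightarrow> L2 (u k)" "L2 h"
  shows "l2_inner (\<lambda>t. \<Sum>k\<in>F. c k * u k t) h = (\<Sum>k\<in>F. c k * l2_inner (u k) h)"
  using assms
proof (induction F rule: infinite_finite_induct)
  case (infinite F) then show ?case by (simp add: l2_inner_def)
next
  case empty then show ?case by (simp add: l2_inner_def)
next
  case (insert x F)
  have "l2_inner (\<lambda>t. \<Sum>k\<in>insert x F. c k * u k t) h
      = l2_inner (\<lambda>t. c x * u x t + (\<Sum>k\<in>F. c k * u k t)) h"
    using insert by simp
  also have "\<dots> = c x * l2_inner (u x) h + l2_inner (\<lambda>t. \<Sum>k\<in>F. c k * u k t) h"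
    using insert by (simp add: ip_add_left L2_scale L2_sum ip_scale_left)
  finally show ?case using insert by simp
qed

lemma ip_add_right: "L2 f \<Longrightarrow> L2 h \<Longrightarrow> L2 h' \<Longrightarrow>
   l2_inner f (\<lambda>t. h t + h' t) = l2_inner f h + l2_inner f h'"
  by (subst (1 2 3) ip_cnj) (simp add: ip_add_left)

lemma ip_scale_right: "l2_inner f (\<lambda>t. c * h t) = cnj c * l2_inner f h"
  by (subst (1 2) ip_cnj) (simp add: ip_scale_left)

lemma ip_diff_right: "L2 f \<Longrightarrow> L2 h \<Longrightarrow> L2 h' \<Longrightarrow>
   l2_inner f (\<lambda>t. h t - h' t) = l2_inner f h - l2_inner f h'"
  by (subst (1 2 3) ip_cnj) (simp add: ip_diff_left)

lemma ip_sum_right: assumes "\<And>k. k \<in> F \<Longrightarrow> L2 (u k)" "L2 h"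
  shows "l2_inner h (\<lambda>t. \<Sum>k\<in>F. c k * u k t) = (\<Sum>k\<in>F. cnj (c k) * l2_inner h (u k))"
  apply (subst ip_cnj)
  apply (subst ip_sum_left[OF assms])
proof -
  have "\<And>k. l2_inner h (u k) = cnj (l2_inner (u k) h)" by (rule ip_cnj)
  then show "cnj (\<Sum>k\<in>F. c k * l2_inner (u k) h) = (\<Sum>k\<in>F. cnj (c k) * l2_inner h (u k))"
    by simp
qed

lemma l2_norm_sq: "(l2_norm f)\<^sup>2 = (LINT t|lborel. (cmod (f t))\<^sup>2)"
  unfolding l2_norm_def by simp

lemma ip_self: "l2_inner f f = complex_of_real ((l2_norm f)\<^sup>2)"
proof -
  have "l2_inner f f = (LINT t|lborel. complex_of_real ((cmod (f t))\<^sup>2))"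
    unfolding l2_inner_def by (simp only: complex_norm_square)
  then show ?thesis by (simp only: l2_norm_sq integral_complex_of_real)
qed

lemma ip_AE_left: "L2 f \<Longrightarrow> L2 f' \<Longrightarrow> L2 h \<Longrightarrow> (AE t in lborel. f t = f' t) \<Longrightarrow> l2_inner f h = l2_inner f' h"
proof -
  assume a: "L2 f" "L2 f'" "L2 h" "AE t in lborel. f t = f' t"
  have [measurable]: "f \<in> borel_measurable borel" "f' \<in> borel_measurable borel" "h \<in> borel_measurable borel"
    using a L2_meas by auto
  show ?thesis
  unfolding l2_inner_def by (rule integral_cong_AE) (use a(4) in \<open>auto elim!: AE_mp\<close>)
qed


definition onb :: "(nat \<Rightarrow> 'd::finite fn) \<Rightarrow> bool" where
  "onb e \<longleftrightarrow> (\<forall>k. L2 (e k)) \<and>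
     (\<forall>j k. l2_inner (e j) (e k) = (if j = k then 1 else 0)) \<and>
     (\<forall>f. L2 f \<longrightarrow> (\<forall>\<epsilon>>0. \<exists>n c. l2_norm (\<lambda>t. f t - (\<Sum>k<n. c k * e k t)) < \<epsilon>))"

lemma onb_L2: "onb e \<Longrightarrow> L2 (e k)" by (simp add: onb_def)
lemma onb_orth: "onb e \<Longrightarrow> l2_inner (e j) (e k) = (if j = k then 1 else 0)" by (simp add: onb_def)

lemma ip_SS:
  assumes "onb e"
  shows "l2_inner (\<lambda>t. \<Sum>k<n. c k * e k t) (\<lambda>t. \<Sum>k<n. c k * e k t) = (\<Sum>k<n. c k * cnj (c k))"
proof -
  have L: "\<And>k. L2 (e k)" using onb_L2[OF assms] .
  have LS: "L2 (\<lambda>t. \<Sum>k<n. c k * e k t)" by (rule L2_sum) (simp add: L)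
  have "l2_inner (\<lambda>t. \<Sum>k<n. c k * e k t) (\<lambda>t. \<Sum>k<n. c k * e k t)
      = (\<Sum>k<n. c k * l2_inner (e k) (\<lambda>t. \<Sum>j<n. c j * e j t))"
    by (rule ip_sum_left) (simp_all add: L LS)
  also have "\<dots> = (\<Sum>k<n. c k * (\<Sum>j<n. cnj (c j) * l2_inner (e k) (e j)))"
    by (subst ip_sum_right) (simp_all add: L)
  also have "\<dots> = (\<Sum>k<n. c k * cnj (c k))"
    by (rule sum.cong) (simp_all add: onb_orth[OF assms] if_distrib sum.delta cong: if_cong)
  finally show ?thesis .
qed

lemma approx_identity:
  assumes "onb e" "L2 f"
  shows "(l2_norm (\<lambda>t. f t - (\<Sum>k<n. c k * e k t)))\<^sup>2
       = (l2_norm f)\<^sup>2 - (\<Sum>k<n. (cmod (l2_inner f (e k)))\<^sup>2) + (\<Sum>k<n. (cmod (c k - l2_inner f (e k)))\<^sup>2)"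
proof -
  define a where "a k = l2_inner f (e k)" for k
  define S where "S = (\<lambda>t. \<Sum>k<n. c k * e k t)"
  have L: "\<And>k. L2 (e k)" using onb_L2[OF assms(1)] .
  have LS: "L2 S" unfolding S_def by (rule L2_sum) (simp add: L)
  have fS: "l2_inner f S = (\<Sum>k<n. cnj (c k) * a k)"
    unfolding S_def a_def by (rule ip_sum_right) (simp_all add: L assms)
  have Sf: "l2_inner S f = (\<Sum>k<n. c k * cnj (a k))"
    unfolding S_def a_def by (subst ip_sum_left) (simp_all add: L assms ip_cnj[of f])
  have SS: "l2_inner S S = (\<Sum>k<n. c k * cnj (c k))"
    unfolding S_def by (rule ip_SS[OF assms(1)])
  have "complex_of_real ((l2_norm (\<lambda>t. f t - S t))\<^sup>2) = l2_inner (\<lambda>t. f t - S t) (\<lambda>t. f t - S t)"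
    by (simp add: ip_self)
  also have "\<dots> = l2_inner f f - l2_inner f S - l2_inner S f + l2_inner S S"
    using assms(2) LS by (simp add: ip_diff_left ip_diff_right L2_diff)
  also have "\<dots> = complex_of_real ((l2_norm f)\<^sup>2) - (\<Sum>k<n. a k * cnj (a k)) + (\<Sum>k<n. (c k - a k) * cnj (c k - a k))"
  proof -
    have alg: "(\<Sum>k<n. (c k - a k) * cnj (c k - a k)) = (\<Sum>k<n. c k * cnj (c k)) - (\<Sum>k<n. cnj (c k) * a k)
       - (\<Sum>k<n. c k * cnj (a k)) + (\<Sum>k<n. a k * cnj (a k))"
      by (simp add: algebra_simps sum.distrib sum_subtractf)
    show ?thesis unfolding alg fS Sf SS ip_self[of f] by simp
  qed
  also have "\<dots> = complex_of_real ((l2_norm f)\<^sup>2 - (\<Sum>k<n. (cmod (a k))\<^sup>2) + (\<Sum>k<n. (cmod (c k - a k))\<^sup>2))"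
    by (simp only: of_real_add of_real_diff of_real_sum complex_norm_square)
  finally show ?thesis unfolding S_def a_def of_real_eq_iff .
qed

lemma parseval:
  assumes "onb e" "L2 f"
  shows "(\<lambda>k. (cmod (l2_inner f (e k)))\<^sup>2) sums (l2_norm f)\<^sup>2"
proof -
  define a where "a k = (cmod (l2_inner f (e k)))\<^sup>2" for k
  have bessel: "(\<Sum>k<n. a k) \<le> (l2_norm f)\<^sup>2" for n
  proof -
    have "(l2_norm (\<lambda>t. f t - (\<Sum>k<n. l2_inner f (e k) * e k t)))\<^sup>2 = (l2_norm f)\<^sup>2 - (\<Sum>k<n. a k)"
      using approx_identity[OF assms, where n=n and c="\<lambda>k. l2_inner f (e k)"] unfolding a_def by simp
    moreover have "0 \<le> (l2_norm (\<lambda>t. f t - (\<Sum>k<n. l2_inner f (e k) * e k t)))\<^sup>2" by simp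
    ultimately show ?thesis by linarith
  qed
  have sm: "summable a"
    by (rule summableI_nonneg_bounded[OF _ bessel]) (simp add: a_def)
  have le: "suminf a \<le> (l2_norm f)\<^sup>2" by (rule suminf_le_const[OF sm bessel])
  have ge: "(l2_norm f)\<^sup>2 \<le> suminf a"
  proof (rule field_le_epsilon)
    fix \<epsilon> :: real assume "\<epsilon> > 0"
    then have "sqrt \<epsilon> > 0" by simp
    then obtain n c where nc: "l2_norm (\<lambda>t. f t - (\<Sum>k<n. c k * e k t)) < sqrt \<epsilon>"
      using assms unfolding onb_def by blast
    have nn: "0 \<le> l2_norm (\<lambda>t. f t - (\<Sum>k<n. c k * e k t))" by (simp add: l2_norm_def)
    have "(l2_norm (\<lambda>t. f t - (\<Sum>k<n. c k * e k t)))\<^sup>2 < \<epsilon>"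
      using power_strict_mono[OF nc nn, of 2] \<open>\<epsilon> > 0\<close> by simp
    then have "(l2_norm f)\<^sup>2 - (\<Sum>k<n. a k) < \<epsilon>"
      using approx_identity[OF assms, where n=n and c=c]
        sum_nonneg[of "{..<n}" "\<lambda>k. (cmod (c k - l2_inner f (e k)))\<^sup>2"] unfolding a_def
      by simp
    moreover have "(\<Sum>k<n. a k) \<le> suminf a"
      by (rule sum_le_suminf[OF sm]) (simp_all add: a_def)
    ultimately show "(l2_norm f)\<^sup>2 \<le> suminf a + \<epsilon>" by simp
  qed
  show ?thesis using sm le ge unfolding a_def[symmetric] by (simp add: sums_iff)
qed


definition polG :: "complex \<Rightarrow> complex \<Rightarrow> complex \<Rightarrow> complex \<Rightarrow> complex \<Rightarrow> complex" where
  "polG P X Y R c = P + cnj c * X + c * Y + c * cnj c * R"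

lemma polG_combo: "polG P X Y R 1 + \<i> * polG P X Y R \<i> - polG P X Y R (-1) - \<i> * polG P X Y R (-\<i>) = 4 * X"
  by (simp add: polG_def complex_eq_iff algebra_simps)

lemma parseval_polar:
  assumes "onb e" "L2 f" "L2 h"
  shows "(\<lambda>k. l2_inner f (e k) * cnj (l2_inner h (e k))) sums l2_inner f h"
proof -
  define a where "a k = l2_inner f (e k)" for k
  define b where "b k = l2_inner h (e k)" for k
  have L: "\<And>k. L2 (e k)" using onb_L2[OF assms(1)] .
  have Q: "(\<lambda>k. polG (a k * cnj (a k)) (a k * cnj (b k)) (b k * cnj (a k)) (b k * cnj (b k)) c)
      sums polG (l2_inner f f) (l2_inner f h) (l2_inner h f) (l2_inner h h) c" for c
  proof -
    define F where "F = (\<lambda>t. f t + c * h t)"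
    have LF: "L2 F" unfolding F_def using assms by (simp add: L2_add L2_scale)
    have "(\<lambda>k. (cmod (l2_inner F (e k)))\<^sup>2) sums (l2_norm F)\<^sup>2" by (rule parseval[OF assms(1) LF])
    then have "(\<lambda>k. complex_of_real ((cmod (l2_inner F (e k)))\<^sup>2)) sums complex_of_real ((l2_norm F)\<^sup>2)"
      by (simp only: sums_of_real_iff)
    then have "(\<lambda>k. l2_inner F (e k) * cnj (l2_inner F (e k))) sums l2_inner F F"
      by (simp only: complex_norm_square ip_self)
    moreover have "l2_inner F (e k) = a k + c * b k" for k
      unfolding F_def a_def b_def using assms L by (simp add: ip_add_left L2_scale ip_scale_left)
    moreover have "l2_inner F F = polG (l2_inner f f) (l2_inner f h) (l2_inner h f) (l2_inner h h) c"
    proof -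
      have "l2_inner F F = l2_inner f F + c * l2_inner h F"
        unfolding F_def[of] using assms LF F_def by (simp add: ip_add_left L2_scale ip_scale_left)
      also have "\<dots> = polG (l2_inner f f) (l2_inner f h) (l2_inner h f) (l2_inner h h) c"
        unfolding F_def using assms
        by (simp add: ip_add_right L2_scale ip_scale_right polG_def algebra_simps)
      finally show ?thesis .
    qed
    ultimately show ?thesis
      by (simp add: polG_def algebra_simps)
  qed
  have "(\<lambda>k. polG (a k * cnj (a k)) (a k * cnj (b k)) (b k * cnj (a k)) (b k * cnj (b k)) 1
        + \<i> * polG (a k * cnj (a k)) (a k * cnj (b k)) (b k * cnj (a k)) (b k * cnj (b k)) \<i>
        - polG (a k * cnj (a k)) (a k * cnj (b k)) (b k * cnj (a k)) (b k * cnj (b k)) (-1)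
        - \<i> * polG (a k * cnj (a k)) (a k * cnj (b k)) (b k * cnj (a k)) (b k * cnj (b k)) (-\<i>))
     sums (polG (l2_inner f f) (l2_inner f h) (l2_inner h f) (l2_inner h h) 1
        + \<i> * polG (l2_inner f f) (l2_inner f h) (l2_inner h f) (l2_inner h h) \<i>
        - polG (l2_inner f f) (l2_inner f h) (l2_inner h f) (l2_inner h h) (-1)
        - \<i> * polG (l2_inner f f) (l2_inner f h) (l2_inner h f) (l2_inner h h) (-\<i>))"
    by (intro sums_diff sums_add sums_mult Q)
  then have "(\<lambda>k. 4 * (a k * cnj (b k))) sums (4 * l2_inner f h)"
    by (simp only: polG_combo)
  then have "(\<lambda>k. (1/4) * (4 * (a k * cnj (b k)))) sums ((1/4) * (4 * l2_inner f h))"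
    by (rule sums_mult)
  then show ?thesis unfolding a_def b_def by simp
qed

lemma final_ineq:
  fixes lam :: "nat \<Rightarrow> real"
  assumes nn: "\<And>k. 0 \<le> lam k" and ub: "\<And>k. lam k \<le> B" and B: "0 < B"
    and d: "0 < \<delta>" "\<delta> < 1"
    and X: "lam sums X" and Y: "(\<lambda>k. (lam k)\<^sup>2) sums Y"
  shows "\<bar>B * real (card {k. lam k > B * (1 - \<delta>)}) - X\<bar> \<le> max (1 / \<delta>) (1 / (1 - \<delta>)) * \<bar>X - (1 / B) * Y\<bar>"
proof -
  define \<tau> where "\<tau> = B * (1 - \<delta>)"
  define T where "T = {k. lam k > \<tau>}"
  define M where "M = max (1 / \<delta>) (1 / (1 - \<delta>))"
  have tau: "\<tau> > 0" unfolding \<tau>_def using B d by simp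
  have "lam \<longlonglongrightarrow> 0" using X summable_LIMSEQ_zero sums_summable by blast
  then obtain N where N: "\<And>n. n \<ge> N \<Longrightarrow> norm (lam n - 0) < \<tau>" using LIMSEQ_D[OF _ tau] by blast
  have "T \<subseteq> {..<N}"
  proof
    fix k assume "k \<in> T"
    then have "lam k > \<tau>" by (simp add: T_def)
    then show "k \<in> {..<N}" using N[of k] nn[of k] by (cases "k \<ge> N") auto
  qed
  then have fin: "finite T" by (rule finite_subset) simp
  define u where "u k = (if k \<in> T then B else 0) - lam k" for k
  define h where "h k = lam k - (lam k)\<^sup>2 / B" for k
  have "(\<lambda>k. if k \<in> T then B else 0) sums (\<Sum>k\<in>T. B)" by (rule sums_If_finite_set[OF fin])
  then have us: "u sums (B * real (card T) - X)" unfolding u_def using X by (simp add: sums_diff mult.commute)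
  have hs: "h sums (X - (1/B) * Y)" unfolding h_def using X sums_divide[OF Y, of B] by (simp add: sums_diff)
  have M1: "M \<ge> 1 / \<delta>" "M \<ge> 1 / (1 - \<delta>)" unfolding M_def by auto
  have hnn: "h k \<ge> 0" for k
  proof -
    have "lam k * lam k \<le> lam k * B" using nn ub by (simp add: mult_left_mono)
    then have "(lam k)\<^sup>2 / B \<le> lam k" using B by (simp add: power2_eq_square divide_le_eq)
    then show ?thesis unfolding h_def by simp
  qed
  have hform: "h k = lam k * (B - lam k) / B" for k
    unfolding h_def using B by (simp add: power2_eq_square field_simps)
  have bound: "\<bar>u k\<bar> \<le> M * h k" for k
  proof (cases "k \<in> T")
    case True
    then have gt: "lam k > B * (1 - \<delta>)" by (simp add: T_def \<tau>_def)
    have uk: "u k = B - lam k" using True by (simp add: u_def)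
    have p: "B - lam k \<ge> 0" using ub[of k] by simp
    have hk: "(B - lam k) * (1 - \<delta>) \<le> h k"
    proof -
      have "(B - lam k) * (B * (1 - \<delta>)) \<le> (B - lam k) * lam k"
        using gt ub[of k] by (intro mult_left_mono) auto
      then show ?thesis unfolding hform using B by (simp add: field_simps)
    qed
    have "\<bar>u k\<bar> = (1 / (1 - \<delta>)) * ((B - lam k) * (1 - \<delta>))" using d uk p by simp
    also have "\<dots> \<le> (1 / (1 - \<delta>)) * h k" by (rule mult_left_mono[OF hk]) (use d in simp)
    also have "\<dots> \<le> M * h k" by (rule mult_right_mono[OF M1(2) hnn])
    finally show ?thesis .
  next
    case False
    then have le: "lam k \<le> B * (1 - \<delta>)" by (simp add: T_def \<tau>_def)
    have uk: "u k = - lam k" using False by (simp add: u_def)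
    have hk: "lam k * \<delta> \<le> h k"
    proof -
      have "lam k * (B * \<delta>) \<le> lam k * (B - lam k)"
        using le nn[of k] by (intro mult_left_mono) (auto simp: algebra_simps)
      then show ?thesis unfolding hform using B by (simp add: field_simps)
    qed
    have "\<bar>u k\<bar> = (1 / \<delta>) * (lam k * \<delta>)" using d uk nn[of k] by simp
    also have "\<dots> \<le> (1 / \<delta>) * h k" by (rule mult_left_mono[OF hk]) (use d in simp)
    also have "\<dots> \<le> M * h k" by (rule mult_right_mono[OF M1(1) hnn])
    finally show ?thesis .
  qed
  have sh: "summable (\<lambda>k. M * h k)" using hs by (intro summable_mult) (simp add: sums_summable)
  have sa: "summable (\<lambda>k. \<bar>u k\<bar>)" by (rule summable_comparison_test[OF _ sh]) (use bound in auto)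
  have "\<bar>B * real (card T) - X\<bar> = \<bar>suminf u\<bar>" using us by (simp add: sums_iff)
  also have "\<dots> \<le> (\<Sum>k. \<bar>u k\<bar>)" by (rule summable_rabs[OF sa])
  also have "\<dots> \<le> (\<Sum>k. M * h k)" by (rule suminf_le[OF bound sa sh])
  also have "\<dots> = M * (X - (1/B) * Y)" using hs by (simp add: sums_iff suminf_mult)
  also have "\<dots> \<le> M * \<bar>X - (1/B) * Y\<bar>"
    using M1 d by (intro mult_left_mono) (auto intro: order_trans[of 0 "1/\<delta>"])
  finally show ?thesis unfolding T_def \<tau>_def M_def .
qed


definition E :: "real \<Rightarrow> complex" where "E r = exp (\<i> * complex_of_real (2 * pi * r))"

lemma tfs_E: "tfs z g t = E (snd z \<bullet> t) * g (t - fst z)"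
  by (simp add: tfs_def E_def)

lemma E_add: "E (a + b) = E a * E b"
  unfolding E_def by (simp add: exp_add[symmetric] algebra_simps)

lemma E_cnj: "E a * cnj (E b) = E (a - b)"
  unfolding E_def by (simp add: exp_cnj exp_add[symmetric] algebra_simps)

lemma norm_E: "cmod (E a) = 1"
  unfolding E_def by (simp add: norm_exp_i_times)

lemma prod_meas: "L2 f \<Longrightarrow> L2 h \<Longrightarrow> (\<lambda>t. f t * cnj (h t)) \<in> borel_measurable borel"
proof -
  assume a: "L2 f" "L2 h"
  have [measurable]: "f \<in> borel_measurable borel" "h \<in> borel_measurable borel"
    using a L2_meas by auto
  show ?thesis by measurable
qed

lemma tfs_norm_sq: assumes "L2 g" shows "(l2_norm (tfs z g))\<^sup>2 = (l2_norm g)\<^sup>2"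
proof -
  have m: "(\<lambda>t. (cmod (g t))\<^sup>2) \<in> borel_measurable borel" using L2_meas[OF assms] by measurable
  have "(l2_norm (tfs z g))\<^sup>2 = (LINT t|lborel. (cmod (g (t + (- fst z))))\<^sup>2)"
    by (simp add: l2_norm_sq norm_tfs)
  also have "\<dots> = (LINT t|lborel. (cmod (g t))\<^sup>2)" by (rule lborel_shift(2)[OF m])
  finally show ?thesis by (simp add: l2_norm_sq)
qed

lemma tfs_ip: assumes "L2 g"
  shows "cmod (l2_inner (tfs z g) (tfs w g)) = cmod (stft g g (z - w))"
proof -
  define F where "F t = tfs z g t * cnj (tfs w g t)" for t
  have m: "F \<in> borel_measurable borel" unfolding F_def by (rule prod_meas) (simp_all add: L2_tfs assms)
  have pw: "F (s + fst w) = E ((snd z - snd w) \<bullet> fst w) *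
      (cnj (g s) * (E ((snd z - snd w) \<bullet> s) * g (s - (fst z - fst w))))" for s
  proof -
    have "F (s + fst w) = (E (snd z \<bullet> (s + fst w)) * cnj (E (snd w \<bullet> (s + fst w)))) * g (s + fst w - fst z) * cnj (g s)"
      unfolding F_def tfs_E by simp
    also have "E (snd z \<bullet> (s + fst w)) * cnj (E (snd w \<bullet> (s + fst w)))
        = E ((snd z - snd w) \<bullet> fst w) * E ((snd z - snd w) \<bullet> s)"
      unfolding E_cnj E_add[symmetric] by (simp add: inner_diff_left inner_add_right algebra_simps)
    also have "s + fst w - fst z = s - (fst z - fst w)" by (simp add: algebra_simps)
    finally show ?thesis by (simp add: algebra_simps)
  qed
  have "l2_inner (tfs z g) (tfs w g) = integral\<^sup>L lborel F" unfolding l2_inner_def F_def ..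
  also have "\<dots> = (LINT s|lborel. F (s + fst w))" by (rule lborel_shift(2)[OF m, symmetric])
  also have "\<dots> = E ((snd z - snd w) \<bullet> fst w) *
      (LINT s|lborel. cnj (g s) * (E ((snd z - snd w) \<bullet> s) * g (s - (fst z - fst w))))"
    unfolding pw by simp
  also have "(LINT s|lborel. cnj (g s) * (E ((snd z - snd w) \<bullet> s) * g (s - (fst z - fst w))))
      = cnj (stft g g (z - w))"
    unfolding stft_def l2_inner_def tfs_E
    by (subst Bochner_Integration.integral_cnj[symmetric]) (simp add: mult.commute)
  finally show ?thesis by (simp add: norm_mult norm_E)
qed


theorem lemma2p6:
  fixes g :: "'d::finite fn" and \<Lambda> \<Omega> :: "'d phase set" and A B \<delta> :: real
    and e :: "nat \<Rightarrow> 'd fn" and lam :: "nat \<Rightarrow> real"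
  assumes "is_lattice \<Lambda>"
    and "gabor_frame g \<Lambda> A B"
    and "compact \<Omega>"
    and "orthonormal_eigenbasis (gabor_mult g \<Omega> \<Lambda>) e lam"
    and "0 < \<delta>" and "\<delta> < 1"
  shows "\<bar>B * real (card {k. lam k > B * (1 - \<delta>)}) - real (card (\<Omega> \<inter> \<Lambda>)) * (l2_norm g)\<^sup>2\<bar>
     \<le> max (1 / \<delta>) (1 / (1 - \<delta>)) *
        \<bar>real (card (\<Omega> \<inter> \<Lambda>)) * (l2_norm g)\<^sup>2
          - (1 / B) * (\<Sum>z\<in>\<Omega> \<inter> \<Lambda>. \<Sum>w\<in>\<Omega> \<inter> \<Lambda>. (cmod (stft g g (z - w)))\<^sup>2)\<bar>"
proof -
  define S where "S = \<Omega> \<inter> \<Lambda>"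
  define \<phi> where "\<phi> z = tfs z g" for z
  define G where "G = gabor_mult g \<Omega> \<Lambda>"
  have Lg: "L2 g" and B: "0 < B"
    and frame: "\<And>f. L2 f \<Longrightarrow> (\<lambda>z. (cmod (stft g f z))\<^sup>2) summable_on \<Lambda> \<and>
        (\<Sum>\<^sub>\<infinity>z\<in>\<Lambda>. (cmod (stft g f z))\<^sup>2) \<le> B * (l2_norm f)\<^sup>2"
    using assms(2) unfolding gabor_frame_def by auto
  have onb: "onb e" using assms(4) unfolding orthonormal_eigenbasis_def onb_def by auto
  have eig: "\<And>k. AE t in lborel. G (e k) t = complex_of_real (lam k) * e k t"
    using assms(4) unfolding orthonormal_eigenbasis_def G_def by auto
  have L: "\<And>k. L2 (e k)" using onb_L2[OF onb] .
  have Lphi: "\<And>z. L2 (\<phi> z)" unfolding \<phi>_def using Lg by (rule L2_tfs)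
  have one: "l2_inner (e k) (e k) = 1" for k using onb_orth[OF onb, of k k] by simp
  have norm1: "(l2_norm (e k))\<^sup>2 = 1" for k
    using one[of k] ip_self[of "e k"] of_real_eq_1_iff by metis
  have Gform: "G f = (\<lambda>t. \<Sum>z\<in>S. l2_inner f (\<phi> z) * \<phi> z t)" for f
    unfolding G_def gabor_mult_def stft_def \<phi>_def S_def ..
  have LG: "L2 (G (e k))" for k unfolding Gform by (rule L2_sum) (simp add: Lphi)
  have eigip: "complex_of_real (lam k) * l2_inner (e k) h
      = (\<Sum>z\<in>S. l2_inner (e k) (\<phi> z) * l2_inner (\<phi> z) h)" if Lh: "L2 h" for k h
  proof -
    have "complex_of_real (lam k) * l2_inner (e k) h = l2_inner (\<lambda>t. complex_of_real (lam k) * e k t) h"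
      by (simp add: ip_scale_left)
    also have "\<dots> = l2_inner (G (e k)) h"
      by (rule ip_AE_left[symmetric]) (simp_all add: LG L2_scale L Lh eig)
    also have "\<dots> = (\<Sum>z\<in>S. l2_inner (e k) (\<phi> z) * l2_inner (\<phi> z) h)"
      unfolding Gform by (rule ip_sum_left) (simp_all add: Lphi Lh)
    finally show ?thesis .
  qed
  have rhs_nn: "0 \<le> max (1 / \<delta>) (1 / (1 - \<delta>)) *
        \<bar>real (card S) * (l2_norm g)\<^sup>2 - (1 / B) * (\<Sum>z\<in>S. \<Sum>w\<in>S. (cmod (stft g g (z - w)))\<^sup>2)\<bar>"
    using assms(5) by (intro mult_nonneg_nonneg) (auto intro: order_trans[OF _ max.cobounded1])
  show ?thesis
  proof (cases "finite S")
    case False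
    have "lam k = 0" for k
      using eigip[OF L, of k k] False by (simp add: one)
    moreover have "0 < B * (1 - \<delta>)" using B assms(6) by simp
    ultimately have "{k. lam k > B * (1 - \<delta>)} = {}" by auto
    then show ?thesis using rhs_nn False unfolding S_def by simp
  next
    case fin: True
    define p where "p z k = l2_inner (\<phi> z) (e k)" for z k
    have cp: "l2_inner (e k) (\<phi> z) = cnj (p z k)" for z k unfolding p_def by (rule ip_cnj)
    have lamc: "complex_of_real (lam k) = (\<Sum>z\<in>S. cnj (p z k) * p z k)" for k
      using eigip[OF L, of k k] by (simp add: one cp p_def)
    have lam_eq: "lam k = (\<Sum>z\<in>S. (cmod (p z k))\<^sup>2)" for k
    proof -
      have "complex_of_real (lam k) = complex_of_real (\<Sum>z\<in>S. (cmod (p z k))\<^sup>2)"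
        unfolding lamc of_real_sum complex_norm_square by (simp add: mult.commute)
      then show ?thesis by (simp only: of_real_eq_iff)
    qed
    have nn: "0 \<le> lam k" for k unfolding lam_eq by (simp add: sum_nonneg)
    have ub: "lam k \<le> B" for k
    proof -
      have st: "(cmod (stft g (e k) z))\<^sup>2 = (cmod (p z k))\<^sup>2" for z
        unfolding stft_def p_def \<phi>_def by (subst ip_cnj) simp
      have "lam k = (\<Sum>\<^sub>\<infinity>z\<in>S. (cmod (stft g (e k) z))\<^sup>2)"
        unfolding lam_eq st using fin by simp
      also have "\<dots> \<le> (\<Sum>\<^sub>\<infinity>z\<in>\<Lambda>. (cmod (stft g (e k) z))\<^sup>2)"
        by (rule infsum_mono_neutral) (use fin frame[OF L] S_def in auto)
      also have "\<dots> \<le> B * (l2_norm (e k))\<^sup>2" using frame[OF L] by auto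
      finally show ?thesis by (simp add: norm1)
    qed
    have Xs: "lam sums (real (card S) * (l2_norm g)\<^sup>2)"
    proof -
      have "(\<lambda>k. \<Sum>z\<in>S. (cmod (p z k))\<^sup>2) sums (\<Sum>z\<in>S. (l2_norm (\<phi> z))\<^sup>2)"
        unfolding p_def by (rule sums_sum) (rule parseval[OF onb Lphi])
      moreover have "(\<Sum>z\<in>S. (l2_norm (\<phi> z))\<^sup>2) = real (card S) * (l2_norm g)\<^sup>2"
        unfolding \<phi>_def by (simp add: tfs_norm_sq[OF Lg])
      ultimately show ?thesis unfolding lam_eq[symmetric] by simp
    qed
    have Ys: "(\<lambda>k. (lam k)\<^sup>2) sums (\<Sum>z\<in>S. \<Sum>w\<in>S. (cmod (stft g g (z - w)))\<^sup>2)"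
    proof -
      have pw: "complex_of_real ((lam k)\<^sup>2)
          = (\<Sum>z\<in>S. \<Sum>w\<in>S. l2_inner (\<phi> w) (\<phi> z) * (p z k * cnj (p w k)))" for k
      proof -
        have "complex_of_real ((lam k)\<^sup>2) = complex_of_real (lam k) * (\<Sum>z\<in>S. l2_inner (e k) (\<phi> z) * p z k)"
          by (simp add: power2_eq_square lamc cp)
        also have "\<dots> = (\<Sum>z\<in>S. (complex_of_real (lam k) * l2_inner (e k) (\<phi> z)) * p z k)"
          by (simp add: sum_distrib_left mult.assoc)
        also have "\<dots> = (\<Sum>z\<in>S. (\<Sum>w\<in>S. l2_inner (e k) (\<phi> w) * l2_inner (\<phi> w) (\<phi> z)) * p z k)"
          by (simp add: eigip[OF Lphi])
        also have "\<dots> = (\<Sum>z\<in>S. \<Sum>w\<in>S. l2_inner (\<phi> w) (\<phi> z) * (p z k * cnj (p w k)))"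
          by (simp add: sum_distrib_right sum_distrib_left cp algebra_simps)
        finally show ?thesis .
      qed
      have "(\<lambda>k. \<Sum>z\<in>S. \<Sum>w\<in>S. l2_inner (\<phi> w) (\<phi> z) * (p z k * cnj (p w k)))
           sums (\<Sum>z\<in>S. \<Sum>w\<in>S. l2_inner (\<phi> w) (\<phi> z) * l2_inner (\<phi> z) (\<phi> w))"
        unfolding p_def
        by (intro sums_sum sums_mult parseval_polar[OF onb Lphi Lphi])
      moreover have "l2_inner (\<phi> w) (\<phi> z) * l2_inner (\<phi> z) (\<phi> w)
          = complex_of_real ((cmod (stft g g (z - w)))\<^sup>2)" for z w
      proof -
        have "l2_inner (\<phi> w) (\<phi> z) * l2_inner (\<phi> z) (\<phi> w)
            = l2_inner (\<phi> z) (\<phi> w) * cnj (l2_inner (\<phi> z) (\<phi> w))"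
          by (subst (2) ip_cnj) simp
        also have "\<dots> = complex_of_real ((cmod (l2_inner (\<phi> z) (\<phi> w)))\<^sup>2)"
          by (simp only: complex_norm_square)
        finally show ?thesis unfolding \<phi>_def tfs_ip[OF Lg] .
      qed
      ultimately have "(\<lambda>k. complex_of_real ((lam k)\<^sup>2))
          sums complex_of_real (\<Sum>z\<in>S. \<Sum>w\<in>S. (cmod (stft g g (z - w)))\<^sup>2)"
        unfolding pw by (simp only: of_real_sum)
      then show ?thesis by (simp only: sums_of_real_iff)
    qed
    show ?thesis using final_ineq[OF nn ub B assms(5,6) Xs Ys] unfolding S_def .
  qed
qed

end
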